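(* Let $\mathfrak g\xrightarrow{\mu}\mathfrak h$ be a crossed module of Lie algebras with action $\mathcal L$. Let $\omega\in\bigwedge^2\mathfrak h^*$ and $\varphi\in(\mathfrak g\oplus\mathfrak h)^*$ satisfy: (1) $-\omega([y_0,y_1],y_2)+\omega([y_0,y_2],y_1)-\omega([y_1,y_2],y_0)=0$ for all $y_0,y_1,y_2\in\mathfrak h$; (2) $\varphi(x_2,y)-\varphi(x_1+x_2,y)+\varphi(x_1,y+\mu(x_2))=0$ for all $x_1,x_2\in\mathfrak g$, $y\in\mathfrak h$; (3) $\omega(y_0,y_1)-\omega(y_0+\mu(x_0),y_1+\mu(x_1))=\varphi([(x_0,y_0),(x_1,y_1)]_{\mathcal L})$ for all $(x_0,y_0),(x_1,y_1)\in\mathfrak g\oplus\mathfrak h$. Let $\mathfrak h\oplus^\omega\mathbb R$ be $\mathfrak h\oplus\mathbb R$ with bracket $[(y_0,\lambda_0),(y_1,\lambda_1)]_\omega=([y_0,y_1],-\omega(y_0,y_1))$. Then $$\mu_\varphi:\mathfrak g\to\mathfrak h\oplus^\omega\mathbb R,\qquad x\mapsto(\mu(x),\varphi(x,0)),$$ together with the action $\mathcal L_{(y,\lambda)}x:=\mathcal L_yx$, is a crossed module of Lie algebras.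
   Context: A crossed module of Lie algebras consists of Lie algebras $\mathfrak g,\mathfrak h$, a Lie algebra homomorphism $\mu:\mathfrak g\to\mathfrak h$ and a Lie algebra homomorphism $\mathcal L:\mathfrak h\to\mathrm{Der}(\mathfrak g)$, $y\mapsto\mathcal L_y$, such that $\mu(\mathcal L_yx)=[y,\mu(x)]$ and $\mathcal L_{\mu(x_0)}x_1=[x_0,x_1]$. The bracket $[\cdot,\cdot]_{\mathcal L}$ on $\mathfrak g\oplus\mathfrak h$ is $[(x_0,y_0),(x_1,y_1)]_{\mathcal L}=([x_0,x_1]+\mathcal L_{y_0}x_1-\mathcal L_{y_1}x_0,[y_0,y_1])$. Conditions (1)–(3) express that $(\omega,\varphi)$ is a 2-cocycle in the total complex of the double complex of the Lie 2-algebra (with trivial real coefficients). *)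

theory Defs
  imports "HOL-Analysis.Analysis"
begin

definition lie_algebra :: "('a::real_vector \<Rightarrow> 'a \<Rightarrow> 'a) \<Rightarrow> bool" where
  "lie_algebra br \<longleftrightarrow>
     bilinear br \<and>
     (\<forall>x. br x x = 0) \<and>
     (\<forall>x y z. br x (br y z) + br y (br z x) + br z (br x y) = 0)"

definition lie_hom ::
  "('a::real_vector \<Rightarrow> 'a \<Rightarrow> 'a) \<Rightarrow> ('b::real_vector \<Rightarrow> 'b \<Rightarrow> 'b) \<Rightarrow> ('a \<Rightarrow> 'b) \<Rightarrow> bool" where
  "lie_hom bra brb f \<longleftrightarrow> linear f \<and> (\<forall>x y. f (bra x y) = brb (f x) (f y))"

definition derivation :: "('a::real_vector \<Rightarrow> 'a \<Rightarrow> 'a) \<Rightarrow> ('a \<Rightarrow> 'a) \<Rightarrow> bool" where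
  "derivation br D \<longleftrightarrow> linear D \<and> (\<forall>x y. D (br x y) = br (D x) y + br x (D y))"

text \<open>Crossed module of Lie algebras \<open>\<mu> : g \<rightarrow> h\<close> with action
\<open>L : h \<rightarrow> Der(g)\<close>; \<open>L\<close> is a Lie algebra homomorphism into \<open>Der(g)\<close> whose
bracket is the commutator.\<close>
definition crossed_module ::
  "('g::real_vector \<Rightarrow> 'g \<Rightarrow> 'g) \<Rightarrow> ('h::real_vector \<Rightarrow> 'h \<Rightarrow> 'h) \<Rightarrow>
   ('g \<Rightarrow> 'h) \<Rightarrow> ('h \<Rightarrow> 'g \<Rightarrow> 'g) \<Rightarrow> bool" where
  "crossed_module brg brh \<mu> L \<longleftrightarrow>
     lie_algebra brg \<and> lie_algebra brh \<and>
     lie_hom brg brh \<mu> \<and>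
     (\<forall>x. linear (\<lambda>y. L y x)) \<and>
     (\<forall>y. derivation brg (L y)) \<and>
     (\<forall>y0 y1. L (brh y0 y1) = (\<lambda>x. L y0 (L y1 x) - L y1 (L y0 x))) \<and>
     (\<forall>y x. \<mu> (L y x) = brh y (\<mu> x)) \<and>
     (\<forall>x0 x1. L (\<mu> x0) x1 = brg x0 x1)"

definition semidirect_bracket ::
  "('g::real_vector \<Rightarrow> 'g \<Rightarrow> 'g) \<Rightarrow> ('h::real_vector \<Rightarrow> 'h \<Rightarrow> 'h) \<Rightarrow> ('h \<Rightarrow> 'g \<Rightarrow> 'g) \<Rightarrow>
   'g \<times> 'h \<Rightarrow> 'g \<times> 'h \<Rightarrow> 'g \<times> 'h" where
  "semidirect_bracket brg brh L p q =
     (brg (fst p) (fst q) + L (snd p) (fst q) - L (snd q) (fst p), brh (snd p) (snd q))"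

definition omega_bracket ::
  "('h::real_vector \<Rightarrow> 'h \<Rightarrow> 'h) \<Rightarrow> ('h \<Rightarrow> 'h \<Rightarrow> real) \<Rightarrow> 'h \<times> real \<Rightarrow> 'h \<times> real \<Rightarrow> 'h \<times> real" where
  "omega_bracket brh \<omega> p q = (brh (fst p) (fst q), - \<omega> (fst p) (fst q))"

end

theory Submission
  imports Defs
begin

lemma lin_I: "(\<And>x y. f (x + y) = f x + f y) \<Longrightarrow> (\<And>c x. f (c *\<^sub>R x) = c *\<^sub>R f x) \<Longrightarrow> linear f"
  by (rule linearI)

theorem mainTheorem15:
  fixes brg :: "'g::real_vector \<Rightarrow> 'g \<Rightarrow> 'g"
    and brh :: "'h::real_vector \<Rightarrow> 'h \<Rightarrow> 'h"
    and \<mu> :: "'g \<Rightarrow> 'h"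
    and L :: "'h \<Rightarrow> 'g \<Rightarrow> 'g"
    and \<omega> :: "'h \<Rightarrow> 'h \<Rightarrow> real"
    and \<phi> :: "'g \<times> 'h \<Rightarrow> real"
  assumes cm: "crossed_module brg brh \<mu> L"
    and \<omega>_bil: "bilinear \<omega>"
    and \<omega>_alt: "\<forall>y. \<omega> y y = 0"
    and \<phi>_lin: "linear \<phi>"
    and c1: "\<forall>y0 y1 y2. - \<omega> (brh y0 y1) y2 + \<omega> (brh y0 y2) y1 - \<omega> (brh y1 y2) y0 = 0"
    and c2: "\<forall>x1 x2 y. \<phi> (x2, y) - \<phi> (x1 + x2, y) + \<phi> (x1, y + \<mu> x2) = 0"
    and c3: "\<forall>x0 y0 x1 y1. \<omega> y0 y1 - \<omega> (y0 + \<mu> x0) (y1 + \<mu> x1)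
               = \<phi> (semidirect_bracket brg brh L (x0, y0) (x1, y1))"
  shows "crossed_module brg (omega_bracket brh \<omega>) (\<lambda>x. (\<mu> x, \<phi> (x, 0))) (\<lambda>p x. L (fst p) x)"
proof -
  have lg: "lie_algebra brg" and lh: "lie_algebra brh" and hm: "lie_hom brg brh \<mu>"
    and Llin: "\<forall>x. linear (\<lambda>y. L y x)" and Ld: "\<forall>y. derivation brg (L y)"
    and Lbr: "\<forall>y0 y1. L (brh y0 y1) = (\<lambda>x. L y0 (L y1 x) - L y1 (L y0 x))"
    and eq1: "\<forall>y x. \<mu> (L y x) = brh y (\<mu> x)"
    and eq2: "\<forall>x0 x1. L (\<mu> x0) x1 = brg x0 x1"
    using cm unfolding crossed_module_def by auto
  have bh: "bilinear brh" and hal: "\<forall>x. brh x x = 0"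
    and hj: "\<forall>x y z. brh x (brh y z) + brh y (brh z x) + brh z (brh x y) = 0"
    using lh unfolding lie_algebra_def by auto
  have bg: "bilinear brg" using lg unfolding lie_algebra_def by auto
  have mulin: "linear \<mu>" and mubr: "\<forall>x y. \<mu> (brg x y) = brh (\<mu> x) (\<mu> y)"
    using hm unfolding lie_hom_def by auto
  have antiw: "\<omega> a b = - \<omega> b a" for a b
  proof -
    have "\<omega> (a+b) (a+b) = 0" using \<omega>_alt by auto
    then have "\<omega> a a + \<omega> a b + \<omega> b a + \<omega> b b = 0"
      by (simp add: bilinear_ladd[OF \<omega>_bil] bilinear_radd[OF \<omega>_bil])
    then show ?thesis using \<omega>_alt by simp
  qed
  have L0: "L 0 x = 0" for x using Llin linear_0 by fastforce
  have mu0: "\<mu> 0 = 0" using mulin linear_0 by auto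
  have w0r: "\<omega> y 0 = 0" for y using bilinear_rzero[OF \<omega>_bil] by auto
  have w0l: "\<omega> 0 y = 0" for y using bilinear_lzero[OF \<omega>_bil] by auto
  have g0l: "brg 0 x = 0" for x using bilinear_lzero[OF bg] by auto
  have h0r: "brh y 0 = 0" for y using bilinear_rzero[OF bh] by auto
  have Lx0: "L y 0 = 0" for y using Ld unfolding derivation_def using linear_0 by auto
  have blin: "bilinear (omega_bracket brh \<omega>)"
    unfolding bilinear_def omega_bracket_def
  proof (intro conjI allI lin_I)
    fix x y z :: "'h \<times> real" and c :: real
    show "(brh (fst x) (fst (y + z)), - \<omega> (fst x) (fst (y + z))) =
          (brh (fst x) (fst y), - \<omega> (fst x) (fst y)) + (brh (fst x) (fst z), - \<omega> (fst x) (fst z))"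
      by (simp add: bilinear_radd[OF bh] bilinear_radd[OF \<omega>_bil])
    show "(brh (fst x) (fst (c *\<^sub>R y)), - \<omega> (fst x) (fst (c *\<^sub>R y))) =
          c *\<^sub>R (brh (fst x) (fst y), - \<omega> (fst x) (fst y))"
      by (simp add: bilinear_rmul[OF bh] bilinear_rmul[OF \<omega>_bil])
    show "(brh (fst (y + z)) (fst x), - \<omega> (fst (y + z)) (fst x)) =
          (brh (fst y) (fst x), - \<omega> (fst y) (fst x)) + (brh (fst z) (fst x), - \<omega> (fst z) (fst x))"
      by (simp add: bilinear_ladd[OF bh] bilinear_ladd[OF \<omega>_bil])
    show "(brh (fst (c *\<^sub>R y)) (fst x), - \<omega> (fst (c *\<^sub>R y)) (fst x)) =
          c *\<^sub>R (brh (fst y) (fst x), - \<omega> (fst y) (fst x))"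
      by (simp add: bilinear_lmul[OF bh] bilinear_lmul[OF \<omega>_bil])
  qed
  have jac2: "- \<omega> a (brh b c) + - \<omega> b (brh c a) + - \<omega> c (brh a b) = 0" for a b c
  proof -
    have "brh c a = - brh a c"
    proof -
      have "brh (a+c) (a+c) = 0" using hal by auto
      then have "brh a a + brh a c + brh c a + brh c c = 0"
        by (simp add: bilinear_ladd[OF bh] bilinear_radd[OF bh] algebra_simps)
      then show ?thesis using hal by (simp add: eq_neg_iff_add_eq_0 add.commute)
    qed
    then have "\<omega> b (brh c a) = - \<omega> b (brh a c)"
      using bilinear_rneg[OF \<omega>_bil] by metis
    then show ?thesis using c1[rule_format, of a b c] antiw[of a "brh b c"] antiw[of b "brh a c"]
      antiw[of c "brh a b"] by linarith
  qed
  have lo: "lie_algebra (omega_bracket brh \<omega>)"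
    unfolding lie_algebra_def
  proof (intro conjI allI blin)
    fix x :: "'h \<times> real" show "omega_bracket brh \<omega> x x = 0"
      using hal \<omega>_alt by (simp add: omega_bracket_def zero_prod_def)
  next
    fix x y z :: "'h \<times> real"
    show "omega_bracket brh \<omega> x (omega_bracket brh \<omega> y z) + omega_bracket brh \<omega> y (omega_bracket brh \<omega> z x) +
          omega_bracket brh \<omega> z (omega_bracket brh \<omega> x y) = 0"
      using hj jac2[of "fst x" "fst y" "fst z"] by (simp add: omega_bracket_def zero_prod_def)
  qed
  have mlin: "linear (\<lambda>x. (\<mu> x, \<phi> (x, 0)))"
  proof (rule lin_I)
    fix x y :: 'g and c :: real
    have "\<phi> (x + y, 0) = \<phi> ((x,0) + (y,0))" by simp
    also have "\<dots> = \<phi> (x,0) + \<phi> (y,0)" using linear_add[OF \<phi>_lin] by blast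
    finally show "(\<mu> (x + y), \<phi> (x + y, 0)) = (\<mu> x, \<phi> (x, 0)) + (\<mu> y, \<phi> (y, 0))"
      using linear_add[OF mulin] by simp
    have "\<phi> (c *\<^sub>R x, 0) = \<phi> (c *\<^sub>R (x,0))" by simp
    also have "\<dots> = c *\<^sub>R \<phi> (x,0)" using linear_scale[OF \<phi>_lin] by blast
    finally show "(\<mu> (c *\<^sub>R x), \<phi> (c *\<^sub>R x, 0)) = c *\<^sub>R (\<mu> x, \<phi> (x, 0))"
      using linear_scale[OF mulin] by simp
  qed
  have mhom: "lie_hom brg (omega_bracket brh \<omega>) (\<lambda>x. (\<mu> x, \<phi> (x, 0)))"
    unfolding lie_hom_def
  proof (intro conjI allI mlin)
    fix x y
    have "\<phi> (brg x y, 0) = - \<omega> (\<mu> x) (\<mu> y)"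
      using spec[OF spec[OF spec[OF spec[OF c3, of x], of 0], of y], of 0] by (simp add: semidirect_bracket_def L0 w0l h0r)
    then show "(\<mu> (brg x y), \<phi> (brg x y, 0)) = omega_bracket brh \<omega> (\<mu> x, \<phi> (x, 0)) (\<mu> y, \<phi> (y, 0))"
      using mubr by (simp add: omega_bracket_def)
  qed
  show ?thesis
    unfolding crossed_module_def
  proof (intro conjI allI lg lo mhom)
    fix x
    show "linear (\<lambda>y. L (fst y) x)"
      using linear_compose[OF linear_fst Llin[rule_format, of x]] by (simp add: o_def)
  next
    fix y :: "'h \<times> real" show "derivation brg (L (fst y))" using Ld by auto
  next
    fix y0 y1 :: "'h \<times> real"
    show "L (fst (omega_bracket brh \<omega> y0 y1)) = (\<lambda>x. L (fst y0) (L (fst y1) x) - L (fst y1) (L (fst y0) x))"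
      using Lbr by (simp add: omega_bracket_def)
  next
    fix y :: "'h \<times> real" and x
    have "\<phi> (L (fst y) x, 0) = - \<omega> (fst y) (\<mu> x)"
      using spec[OF spec[OF spec[OF spec[OF c3, of 0], of "fst y"], of x], of 0] by (simp add: semidirect_bracket_def Lx0 g0l h0r w0r mu0)
    then show "(\<mu> (L (fst y) x), \<phi> (L (fst y) x, 0)) = omega_bracket brh \<omega> y (\<mu> x, \<phi> (x, 0))"
      using eq1 by (simp add: omega_bracket_def)
  next
    fix x0 x1 show "L (fst (\<mu> x0, \<phi> (x0, 0))) x1 = brg x0 x1" using eq2 by simp
  qed
qed

end
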